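(* Let $G$ and $H$ be connected graphs such that $G_{SR}$ and $H_{SR}$ are vertex-transitive. Then $$dim_s(G\square H)=\min\{|\partial(G)|\,dim_s(H),\ |\partial(H)|\,dim_s(G)\}.$$
   Context: Graphs are finite, simple, undirected; for connected $G$, $d_G$ is the shortest-path distance and $I_G[u,v]$ is the set of vertices lying on some shortest $u$–$v$ path. A vertex $w$ strongly resolves vertices $u,v$ if $v\in I_G[u,w]$ or $u\in I_G[v,w]$. A strong resolving set of $G$ is a set $S\subseteq V(G)$ such that every pair of vertices is strongly resolved by some vertex of $S$; $dim_s(G)$ is the minimum cardinality of such a set. A vertex $u$ is maximally distant from $v$ if $d_G(v,w)\le d_G(u,v)$ for every neighbor $w$ of $u$; distinct $u,v$ are mutually maximally distant if each is maximally distant from the other. The boundary $\partial(G)$ is the set of vertices mutually maximally distant with some vertex. The strong resolving graph $G_{SR}$ has vertex set $\partial(G)$, two vertices adjacent iff they are mutually maximally distant in $G$. $G\square H$ denotes the Cartesian product: vertex set $V(G)\times V(H)$, $(a,b)\sim(c,d)$ iff ($a=c$ and $bd\in E(H)$) or ($b=d$ and $ac\in E(G)$). *)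

theory Defs
  imports Main
begin

definition graph :: "'a set \<Rightarrow> ('a \<times> 'a) set \<Rightarrow> bool" where
  "graph V E \<longleftrightarrow> finite V \<and> E \<subseteq> V \<times> V \<and> sym E \<and> irrefl E"

definition connected_graph :: "'a set \<Rightarrow> ('a \<times> 'a) set \<Rightarrow> bool" where
  "connected_graph V E \<longleftrightarrow> graph V E \<and> (\<forall>u\<in>V. \<forall>v\<in>V. (u, v) \<in> E\<^sup>*)"

definition gdist :: "('a \<times> 'a) set \<Rightarrow> 'a \<Rightarrow> 'a \<Rightarrow> nat" where
  "gdist E u v = (LEAST n. (u, v) \<in> E ^^ n)"

definition interval :: "'a set \<Rightarrow> ('a \<times> 'a) set \<Rightarrow> 'a \<Rightarrow> 'a \<Rightarrow> 'a set" where
  "interval V E u v = {w \<in> V. gdist E u w + gdist E w v = gdist E u v}"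

definition strongly_resolves :: "'a set \<Rightarrow> ('a \<times> 'a) set \<Rightarrow> 'a \<Rightarrow> 'a \<Rightarrow> 'a \<Rightarrow> bool" where
  "strongly_resolves V E w u v \<longleftrightarrow> v \<in> interval V E u w \<or> u \<in> interval V E v w"

definition strong_resolving_set :: "'a set \<Rightarrow> ('a \<times> 'a) set \<Rightarrow> 'a set \<Rightarrow> bool" where
  "strong_resolving_set V E S \<longleftrightarrow> S \<subseteq> V \<and>
     (\<forall>u\<in>V. \<forall>v\<in>V. u \<noteq> v \<longrightarrow> (\<exists>w\<in>S. strongly_resolves V E w u v))"

definition strong_metric_dim :: "'a set \<Rightarrow> ('a \<times> 'a) set \<Rightarrow> nat" where
  "strong_metric_dim V E = (LEAST n. \<exists>S. strong_resolving_set V E S \<and> card S = n)"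

definition max_distant :: "'a set \<Rightarrow> ('a \<times> 'a) set \<Rightarrow> 'a \<Rightarrow> 'a \<Rightarrow> bool" where
  "max_distant V E u v \<longleftrightarrow> (\<forall>w. (u, w) \<in> E \<longrightarrow> gdist E v w \<le> gdist E u v)"

definition mutually_max_distant :: "'a set \<Rightarrow> ('a \<times> 'a) set \<Rightarrow> 'a \<Rightarrow> 'a \<Rightarrow> bool" where
  "mutually_max_distant V E u v \<longleftrightarrow> u \<in> V \<and> v \<in> V \<and> u \<noteq> v \<and>
     max_distant V E u v \<and> max_distant V E v u"

definition boundary :: "'a set \<Rightarrow> ('a \<times> 'a) set \<Rightarrow> 'a set" where
  "boundary V E = {u \<in> V. \<exists>v\<in>V. mutually_max_distant V E u v}"

text \<open>Edge relation of the strong resolving graph (its vertex set is boundary V E).\<close>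
definition sr_edges :: "'a set \<Rightarrow> ('a \<times> 'a) set \<Rightarrow> ('a \<times> 'a) set" where
  "sr_edges V E = {(u, v). u \<in> boundary V E \<and> v \<in> boundary V E \<and> mutually_max_distant V E u v}"

definition vertex_transitive :: "'a set \<Rightarrow> ('a \<times> 'a) set \<Rightarrow> bool" where
  "vertex_transitive V E \<longleftrightarrow> (\<forall>u\<in>V. \<forall>v\<in>V. \<exists>f. bij_betw f V V \<and>
     (\<forall>x\<in>V. \<forall>y\<in>V. (x, y) \<in> E \<longleftrightarrow> (f x, f y) \<in> E) \<and> f u = v)"

definition cart_edges :: "'a set \<Rightarrow> ('a \<times> 'a) set \<Rightarrow> 'b set \<Rightarrow> ('b \<times> 'b) set
    \<Rightarrow> (('a \<times> 'b) \<times> ('a \<times> 'b)) set" where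
  "cart_edges VG EG VH EH = {((a, b), (c, d)). a \<in> VG \<and> c \<in> VG \<and> b \<in> VH \<and> d \<in> VH \<and>
     ((a = c \<and> (b, d) \<in> EH) \<or> (b = d \<and> (a, c) \<in> EG))}"

end

theory Submission
  imports Defs "HOL-Library.FuncSet"
begin



lemma relpow_sym: "sym E \<Longrightarrow> (u,v) \<in> E^^n \<Longrightarrow> (v,u) \<in> E^^n"
proof (induction n arbitrary: v)
  case 0 then show ?case by simp
next
  case (Suc n)
  from Suc.prems(2) obtain y where "(u,y) \<in> E^^n" "(y,v) \<in> E" by auto
  then show ?case using Suc by (meson relpow_Suc_I2 symD)
qed

lemma relpow_in_V: "E \<subseteq> V \<times> V \<Longrightarrow> (u,v) \<in> E^^n \<Longrightarrow> u \<in> V \<Longrightarrow> v \<in> V"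
  by (induction n arbitrary: v) auto

lemma gdist_le: "(u,v) \<in> E^^n \<Longrightarrow> gdist E u v \<le> n"
  unfolding gdist_def by (rule Least_le)

lemma gdist_path:
  assumes "connected_graph V E" "u \<in> V" "v \<in> V"
  shows "(u,v) \<in> E^^(gdist E u v)"
proof -
  from assms have "(u,v) \<in> E\<^sup>*" unfolding connected_graph_def by blast
  then obtain n where "(u,v) \<in> E^^n" using rtrancl_power by blast
  then show ?thesis unfolding gdist_def by (rule LeastI)
qed

lemma gdist_refl: "gdist E u u = 0"
  unfolding gdist_def by (rule Least_eq_0) simp

lemma gdist_eq0:
  assumes "connected_graph V E" "u \<in> V" "v \<in> V" "gdist E u v = 0"
  shows "u = v"
  using gdist_path[OF assms(1-3)] assms(4) by simp

lemma gdist_sym: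
  assumes "connected_graph V E" "u \<in> V" "v \<in> V"
  shows "gdist E u v = gdist E v u"
proof -
  have s: "sym E" using assms(1) unfolding connected_graph_def graph_def by blast
  have "gdist E v u \<le> gdist E u v"
    by (rule gdist_le[OF relpow_sym[OF s gdist_path[OF assms]]])
  moreover have "gdist E u v \<le> gdist E v u"
    by (rule gdist_le[OF relpow_sym[OF s gdist_path[OF assms(1,3,2)]]])
  ultimately show ?thesis by simp
qed

lemma gdist_tri:
  assumes "connected_graph V E" "u \<in> V" "v \<in> V" "w \<in> V"
  shows "gdist E u w \<le> gdist E u v + gdist E v w"
proof -
  have "(u,w) \<in> E^^(gdist E u v + gdist E v w)"
    unfolding relpow_add using gdist_path[OF assms(1-3)] gdist_path[OF assms(1,3,4)] by blast
  then show ?thesis by (rule gdist_le)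
qed

lemma graph_sub: "connected_graph V E \<Longrightarrow> E \<subseteq> V \<times> V"
  unfolding connected_graph_def graph_def by blast

lemma gdist_nb:
  assumes "connected_graph V E" "u \<in> V" "(x,y) \<in> E"
  shows "gdist E u y \<le> gdist E u x + 1"
proof -
  have "x \<in> V" using graph_sub[OF assms(1)] assms(3) by blast
  then have "(u,y) \<in> E^^(Suc (gdist E u x))"
    by (rule relpow_Suc_I[OF gdist_path[OF assms(1,2)] assms(3)])
  then show ?thesis using gdist_le by (metis Suc_eq_plus1)
qed

lemma gdist_nb_sym:
  assumes "connected_graph V E" "u \<in> V" "(x,y) \<in> E"
  shows "gdist E u x \<le> gdist E u y + 1"
proof -
  have "sym E" using assms(1) unfolding connected_graph_def graph_def by blast
  then have "(y,x) \<in> E" using assms(3) by (meson symD)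
  then show ?thesis using gdist_nb[OF assms(1,2)] by blast
qed

lemma gdist_step:
  assumes "connected_graph V E" "v \<in> V" "w \<in> V" "v \<noteq> w"
  shows "\<exists>v'. (v,v') \<in> E \<and> gdist E v' w + 1 \<le> gdist E v w"
proof -
  have p: "(v,w) \<in> E^^(gdist E v w)" by (rule gdist_path[OF assms(1-3)])
  have "gdist E v w \<noteq> 0" using gdist_eq0[OF assms(1-3)] assms(4) by blast
  then obtain d where d: "gdist E v w = Suc d" by (cases "gdist E v w") auto
  then obtain v' where v': "(v,v') \<in> E" "(v',w) \<in> E^^d" using p relpow_Suc_E2 by metis
  have "gdist E v' w \<le> d" by (rule gdist_le[OF v'(2)])
  then show ?thesis using v'(1) d by auto
qed




definition hitset :: "'a set \<Rightarrow> ('a \<times> 'a) set \<Rightarrow> 'a set \<Rightarrow> bool" where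
  "hitset V E S \<longleftrightarrow> S \<subseteq> V \<and> (\<forall>u v. mutually_max_distant V E u v \<longrightarrow> u \<in> S \<or> v \<in> S)"

lemma md_res_aux:
  assumes c: "connected_graph V E" and V: "u \<in> V" "v \<in> V" "w \<in> V"
    and md: "max_distant V E v u" and eq: "gdist E u v + gdist E v w = gdist E u w"
  shows "v = w"
proof (rule ccontr)
  assume "v \<noteq> w"
  then obtain v' where v': "(v,v') \<in> E" "gdist E v' w + 1 \<le> gdist E v w"
    using gdist_step[OF c V(2,3)] by blast
  have v'V: "v' \<in> V" using graph_sub[OF c] v'(1) by blast
  have "gdist E u w \<le> gdist E u v' + gdist E v' w" by (rule gdist_tri[OF c V(1) v'V V(3)])
  moreover have "gdist E u v' \<le> gdist E v u" using md v'(1) unfolding max_distant_def by blast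
  moreover have "gdist E v u = gdist E u v" using gdist_sym[OF c V(2,1)] .
  ultimately show False using eq v'(2) by linarith
qed

lemma mmd_only:
  assumes c: "connected_graph V E" and m: "mutually_max_distant V E u v"
    and w: "w \<in> V" and r: "strongly_resolves V E w u v"
  shows "w = u \<or> w = v"
proof -
  have V: "u \<in> V" "v \<in> V" and md: "max_distant V E u v" "max_distant V E v u"
    using m unfolding mutually_max_distant_def by auto
  from r consider "v \<in> interval V E u w" | "u \<in> interval V E v w"
    unfolding strongly_resolves_def by blast
  then show ?thesis
  proof cases
    case 1
    then have "gdist E u v + gdist E v w = gdist E u w" unfolding interval_def by blast
    then show ?thesis using md_res_aux[OF c V w md(2)] by blast
  next
    case 2
    then have "gdist E v u + gdist E u w = gdist E v w" unfolding interval_def by blast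
    then show ?thesis using md_res_aux[OF c V(2,1) w md(1)] by blast
  qed
qed

lemma maxpair_md:
  assumes c: "connected_graph V E" and V: "u \<in> V" "v \<in> V" "x \<in> V" "y \<in> V"
    and eq: "gdist E x y = gdist E x u + gdist E u v + gdist E v y"
    and mx: "\<And>x'. x' \<in> V \<Longrightarrow> gdist E x' y = gdist E x' u + gdist E u v + gdist E v y
               \<Longrightarrow> gdist E x' y \<le> gdist E x y"
  shows "max_distant V E x y"
  unfolding max_distant_def
proof (intro allI impI)
  fix z assume z: "(x,z) \<in> E"
  have zV: "z \<in> V" using graph_sub[OF c] z by blast
  show "gdist E y z \<le> gdist E x y"
  proof (rule ccontr)
    assume "\<not> ?thesis"
    then have lt: "gdist E x y < gdist E y z" by simp
    have s1: "gdist E y z = gdist E z y" by (rule gdist_sym[OF c V(4) zV])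
    have a: "gdist E z y \<le> gdist E x y + 1"
      using gdist_nb[OF c V(4) z] gdist_sym[OF c V(4) V(3)] s1 by linarith
    have b: "gdist E z u \<le> gdist E x u + 1"
      using gdist_nb[OF c V(1) z] gdist_sym[OF c V(1) V(3)] gdist_sym[OF c V(1) zV] by linarith
    have t1: "gdist E z y \<le> gdist E z u + gdist E u y" by (rule gdist_tri[OF c zV V(1) V(4)])
    have t2: "gdist E u y \<le> gdist E u v + gdist E v y" by (rule gdist_tri[OF c V(1) V(2) V(4)])
    have e2: "gdist E z y = gdist E z u + gdist E u v + gdist E v y"
      using a b t1 t2 eq lt s1 by linarith
    have "gdist E z y \<le> gdist E x y" by (rule mx[OF zV e2])
    then show False using lt s1 by linarith
  qed
qed

lemma srs_iff:
  assumes c: "connected_graph V E"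
  shows "strong_resolving_set V E S \<longleftrightarrow> hitset V E S"
proof
  assume s: "strong_resolving_set V E S"
  show "hitset V E S" unfolding hitset_def
  proof (intro conjI allI impI)
    show "S \<subseteq> V" using s unfolding strong_resolving_set_def by blast
    fix u v assume m: "mutually_max_distant V E u v"
    then have "u \<in> V" "v \<in> V" "u \<noteq> v" unfolding mutually_max_distant_def by auto
    then obtain w where "w \<in> S" "strongly_resolves V E w u v"
      using s unfolding strong_resolving_set_def by blast
    then show "u \<in> S \<or> v \<in> S" using mmd_only[OF c m] \<open>S \<subseteq> V\<close> by blast
  qed
next
  assume h: "hitset V E S"
  show "strong_resolving_set V E S" unfolding strong_resolving_set_def
  proof (intro conjI ballI impI)
    show "S \<subseteq> V" using h unfolding hitset_def by blast
    fix u v assume uV: "u \<in> V" and vV: "v \<in> V" and uv: "u \<noteq> v"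
    define C where "C = {(x,y). x \<in> V \<and> y \<in> V \<and> gdist E x y = gdist E x u + gdist E u v + gdist E v y}"
    have fin: "finite V" using c unfolding connected_graph_def graph_def by blast
    have fC: "finite C" unfolding C_def
      by (rule finite_subset[of _ "V \<times> V"]) (auto simp: fin)
    have uvC: "(u,v) \<in> C" unfolding C_def using uV vV by (simp add: gdist_refl)
    define f where "f = (\<lambda>p. gdist E (fst p) (snd p))"
    have "Max (f ` C) \<in> f ` C" using fC uvC by (intro Max_in) auto
    then obtain p where pC: "p \<in> C" and pm: "f p = Max (f ` C)" by auto
    obtain x y where pxy: "p = (x,y)" by (cases p)
    have xV: "x \<in> V" and yV: "y \<in> V" and eq: "gdist E x y = gdist E x u + gdist E u v + gdist E v y"
      using pC pxy unfolding C_def by auto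
    have mx: "\<And>q. q \<in> C \<Longrightarrow> f q \<le> f p" using pm fC by simp
    have md1: "max_distant V E x y"
    proof (rule maxpair_md[OF c uV vV xV yV eq])
      fix x' assume "x' \<in> V" "gdist E x' y = gdist E x' u + gdist E u v + gdist E v y"
      then have "(x',y) \<in> C" unfolding C_def using yV by auto
      then show "gdist E x' y \<le> gdist E x y" using mx[of "(x',y)"] pxy unfolding f_def by simp
    qed
    have eq': "gdist E y x = gdist E y v + gdist E v u + gdist E u x"
      using eq gdist_sym[OF c xV yV] gdist_sym[OF c xV uV] gdist_sym[OF c uV vV] gdist_sym[OF c vV yV]
      by linarith
    have md2: "max_distant V E y x"
    proof (rule maxpair_md[OF c vV uV yV xV eq'])
      fix y' assume y'V: "y' \<in> V" and e: "gdist E y' x = gdist E y' v + gdist E v u + gdist E u x"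
      have "gdist E x y' = gdist E x u + gdist E u v + gdist E v y'"
        using e gdist_sym[OF c xV y'V] gdist_sym[OF c xV uV] gdist_sym[OF c uV vV] gdist_sym[OF c vV y'V]
        by linarith
      then have "(x,y') \<in> C" unfolding C_def using xV y'V by auto
      then show "gdist E y' x \<le> gdist E y x" using mx[of "(x,y')"] pxy gdist_sym[OF c xV y'V]
          gdist_sym[OF c xV yV] unfolding f_def by simp
    qed
    have "gdist E u v \<noteq> 0" using gdist_eq0[OF c uV vV] uv by blast
    then have "x \<noteq> y" using eq gdist_refl[of E x] by auto
    then have mm: "mutually_max_distant V E x y"
      unfolding mutually_max_distant_def using xV yV md1 md2 by blast
    have tx: "gdist E x v \<le> gdist E x u + gdist E u v" by (rule gdist_tri[OF c xV uV vV])
    have tx2: "gdist E x y \<le> gdist E x v + gdist E v y" by (rule gdist_tri[OF c xV vV yV])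
    have ty: "gdist E u y \<le> gdist E u v + gdist E v y" by (rule gdist_tri[OF c uV vV yV])
    have ty2: "gdist E x y \<le> gdist E x u + gdist E u y" by (rule gdist_tri[OF c xV uV yV])
    have ix: "u \<in> interval V E v x" unfolding interval_def
      using uV tx tx2 eq gdist_sym[OF c xV uV] gdist_sym[OF c xV vV] gdist_sym[OF c uV vV] by auto
    have iy: "v \<in> interval V E u y" unfolding interval_def
      using vV ty ty2 eq gdist_sym[OF c uV vV] by auto
    from h mm have "x \<in> S \<or> y \<in> S" unfolding hitset_def by blast
    then show "\<exists>w\<in>S. strongly_resolves V E w u v"
      unfolding strongly_resolves_def using ix iy by blast
  qed
qed

lemma dim_props:
  assumes c: "connected_graph V E"
  shows "\<exists>S. hitset V E S \<and> card S = strong_metric_dim V E"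
    and "\<And>S. hitset V E S \<Longrightarrow> strong_metric_dim V E \<le> card S"
proof -
  have e: "\<exists>S. strong_resolving_set V E S \<and> card S = card V"
    using srs_iff[OF c] unfolding hitset_def mutually_max_distant_def by blast
  show "\<exists>S. hitset V E S \<and> card S = strong_metric_dim V E"
    using LeastI_ex[of "\<lambda>n. \<exists>S. strong_resolving_set V E S \<and> card S = n"] e
    unfolding strong_metric_dim_def srs_iff[OF c] by blast
  fix S assume "hitset V E S"
  then show "strong_metric_dim V E \<le> card S"
    unfolding strong_metric_dim_def srs_iff[OF c] by (blast intro: Least_le)
qed




lemma cart_graph:
  assumes "graph VG EG" "graph VH EH"
  shows "graph (VG \<times> VH) (cart_edges VG EG VH EH)"
  using assms unfolding graph_def cart_edges_def sym_def irrefl_def by auto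

lemma lift_G:
  assumes "EG \<subseteq> VG \<times> VG" "g \<in> VG" "h \<in> VH"
  shows "(g,g') \<in> EG^^a \<Longrightarrow> ((g,h),(g',h)) \<in> (cart_edges VG EG VH EH)^^a"
proof (induction a arbitrary: g')
  case 0 then show ?case by simp
next
  case (Suc a)
  then obtain y where y: "(g,y) \<in> EG^^a" "(y,g') \<in> EG" by auto
  have "((y,h),(g',h)) \<in> cart_edges VG EG VH EH"
    using y(2) assms unfolding cart_edges_def by auto
  then show ?case using Suc.IH[OF y(1)] by auto
qed

lemma lift_H:
  assumes "EH \<subseteq> VH \<times> VH" "g \<in> VG" "h \<in> VH"
  shows "(h,h') \<in> EH^^b \<Longrightarrow> ((g,h),(g,h')) \<in> (cart_edges VG EG VH EH)^^b"
proof (induction b arbitrary: h')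
  case 0 then show ?case by simp
next
  case (Suc b)
  then obtain y where y: "(h,y) \<in> EH^^b" "(y,h') \<in> EH" by auto
  have "((g,y),(g,h')) \<in> cart_edges VG EG VH EH"
    using y(2) assms unfolding cart_edges_def by auto
  then show ?case using Suc.IH[OF y(1)] by auto
qed

lemma proj:
  "((g,h),(g',h')) \<in> (cart_edges VG EG VH EH)^^n \<Longrightarrow>
     \<exists>a b. a + b = n \<and> (g,g') \<in> EG^^a \<and> (h,h') \<in> EH^^b"
proof (induction n arbitrary: g' h')
  case 0 then show ?case by auto
next
  case (Suc n)
  then obtain z where z: "((g,h),z) \<in> (cart_edges VG EG VH EH)^^n" "(z,(g',h')) \<in> cart_edges VG EG VH EH"
    by auto
  obtain g1 h1 where zz: "z = (g1,h1)" by (cases z)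
  obtain a b where ab: "a + b = n" "(g,g1) \<in> EG^^a" "(h,h1) \<in> EH^^b"
    using Suc.IH z(1) zz by blast
  from z(2) zz have "(g1 = g' \<and> (h1,h') \<in> EH) \<or> (h1 = h' \<and> (g1,g') \<in> EG)"
    unfolding cart_edges_def by auto
  then show ?case
  proof
    assume "g1 = g' \<and> (h1,h') \<in> EH"
    then have "(h,h') \<in> EH^^(Suc b)" "(g,g') \<in> EG^^a" using ab by auto
    then show ?thesis using ab(1) by (intro exI[of _ a] exI[of _ "Suc b"]) simp
  next
    assume "h1 = h' \<and> (g1,g') \<in> EG"
    then have "(g,g') \<in> EG^^(Suc a)" "(h,h') \<in> EH^^b" using ab by auto
    then show ?thesis using ab(1) by (intro exI[of _ "Suc a"] exI[of _ b]) simp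
  qed
qed

lemma cart_path:
  assumes "EG \<subseteq> VG \<times> VG" "EH \<subseteq> VH \<times> VH" "g \<in> VG" "h \<in> VH" "g' \<in> VG"
    "(g,g') \<in> EG^^a" "(h,h') \<in> EH^^b"
  shows "((g,h),(g',h')) \<in> (cart_edges VG EG VH EH)^^(a+b)"
  unfolding relpow_add
  using lift_G[OF assms(1,3,4) assms(6)] lift_H[OF assms(2,5,4) assms(7)] by blast

lemma cart_conn:
  assumes cG: "connected_graph VG EG" and cH: "connected_graph VH EH"
  shows "connected_graph (VG \<times> VH) (cart_edges VG EG VH EH)"
  unfolding connected_graph_def
proof (intro conjI ballI)
  show "graph (VG \<times> VH) (cart_edges VG EG VH EH)"
    using cart_graph cG cH unfolding connected_graph_def by blast
  fix p q assume p: "p \<in> VG \<times> VH" and q: "q \<in> VG \<times> VH"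
  obtain g h where pp: "p = (g,h)" by (cases p)
  obtain g' h' where qq: "q = (g',h')" by (cases q)
  have "((g,h),(g',h')) \<in> (cart_edges VG EG VH EH)^^(gdist EG g g' + gdist EH h h')"
    using p q pp qq by (intro cart_path graph_sub[OF cG] graph_sub[OF cH] gdist_path[OF cG]
        gdist_path[OF cH]) auto
  then show "(p,q) \<in> (cart_edges VG EG VH EH)\<^sup>*" using pp qq rtrancl_power by blast
qed

lemma cart_dist:
  assumes cG: "connected_graph VG EG" and cH: "connected_graph VH EH"
    and V: "g \<in> VG" "g' \<in> VG" "h \<in> VH" "h' \<in> VH"
  shows "gdist (cart_edges VG EG VH EH) (g,h) (g',h') = gdist EG g g' + gdist EH h h'"
proof -
  let ?P = "cart_edges VG EG VH EH"
  have "((g,h),(g',h')) \<in> ?P^^(gdist EG g g' + gdist EH h h')"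
    using V by (intro cart_path graph_sub[OF cG] graph_sub[OF cH] gdist_path[OF cG]
        gdist_path[OF cH]) auto
  then have le: "gdist ?P (g,h) (g',h') \<le> gdist EG g g' + gdist EH h h'" by (rule gdist_le)
  have "((g,h),(g',h')) \<in> ?P^^(gdist ?P (g,h) (g',h'))"
    using V by (intro gdist_path[OF cart_conn[OF cG cH]]) auto
  then obtain a b where ab: "a + b = gdist ?P (g,h) (g',h')" "(g,g') \<in> EG^^a" "(h,h') \<in> EH^^b"
    using proj[where VG=VG and EG=EG and VH=VH and EH=EH] by blast
  have "gdist EG g g' \<le> a" "gdist EH h h' \<le> b" using gdist_le[OF ab(2)] gdist_le[OF ab(3)] by auto
  then show ?thesis using le ab(1) by linarith
qed

lemma cart_md:
  assumes cG: "connected_graph VG EG" and cH: "connected_graph VH EH"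
    and V: "g \<in> VG" "g' \<in> VG" "h \<in> VH" "h' \<in> VH"
  shows "max_distant (VG \<times> VH) (cart_edges VG EG VH EH) (g,h) (g',h') \<longleftrightarrow>
         max_distant VG EG g g' \<and> max_distant VH EH h h'"
proof
  let ?P = "cart_edges VG EG VH EH"
  assume m: "max_distant (VG \<times> VH) ?P (g,h) (g',h')"
  show "max_distant VG EG g g' \<and> max_distant VH EH h h'"
    unfolding max_distant_def
  proof (intro conjI allI impI)
    fix a assume a: "(g,a) \<in> EG"
    have aV: "a \<in> VG" using graph_sub[OF cG] a by blast
    have "((g,h),(a,h)) \<in> ?P" using a V aV unfolding cart_edges_def by auto
    then have "gdist ?P (g',h') (a,h) \<le> gdist ?P (g,h) (g',h')"
      using m unfolding max_distant_def by blast
    then show "gdist EG g' a \<le> gdist EG g g'"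
      using cart_dist[OF cG cH V(2) aV V(4,3)] cart_dist[OF cG cH V] gdist_sym[OF cH V(3,4)] by linarith
  next
    fix b assume b: "(h,b) \<in> EH"
    have bV: "b \<in> VH" using graph_sub[OF cH] b by blast
    have "((g,h),(g,b)) \<in> ?P" using b V bV unfolding cart_edges_def by auto
    then have "gdist ?P (g',h') (g,b) \<le> gdist ?P (g,h) (g',h')"
      using m unfolding max_distant_def by blast
    then show "gdist EH h' b \<le> gdist EH h h'"
      using cart_dist[OF cG cH V(2,1) V(4) bV] cart_dist[OF cG cH V] gdist_sym[OF cG V(1,2)] by linarith
  qed
next
  let ?P = "cart_edges VG EG VH EH"
  assume m: "max_distant VG EG g g' \<and> max_distant VH EH h h'"
  show "max_distant (VG \<times> VH) ?P (g,h) (g',h')"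
    unfolding max_distant_def
  proof (intro allI impI)
    fix w assume w: "((g,h),w) \<in> ?P"
    obtain c d where wcd: "w = (c,d)" by (cases w)
    from w wcd have cd: "c \<in> VG" "d \<in> VH" "(c = g \<and> (h,d) \<in> EH) \<or> (d = h \<and> (g,c) \<in> EG)"
      unfolding cart_edges_def by auto
    have e: "gdist ?P (g',h') w = gdist EG g' c + gdist EH h' d"
      using cart_dist[OF cG cH V(2) cd(1) V(4) cd(2)] wcd by simp
    have e2: "gdist ?P (g,h) (g',h') = gdist EG g g' + gdist EH h h'" by (rule cart_dist[OF cG cH V])
    from cd(3) show "gdist ?P (g',h') w \<le> gdist ?P (g,h) (g',h')"
    proof
      assume "c = g \<and> (h,d) \<in> EH"
      then show ?thesis using m e e2 gdist_sym[OF cG V(1,2)] unfolding max_distant_def by fastforce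
    next
      assume "d = h \<and> (g,c) \<in> EG"
      then show ?thesis using m e e2 gdist_sym[OF cH V(3,4)] unfolding max_distant_def by fastforce
    qed
  qed
qed

lemma has_nb:
  assumes c: "connected_graph V E" and "card V \<ge> 2" "g \<in> V"
  shows "\<exists>a. (g,a) \<in> E"
proof -
  have "\<exists>v\<in>V. v \<noteq> g"
  proof (rule ccontr)
    assume "\<not> ?thesis" then have "V \<subseteq> {g}" by blast
    then have "card V \<le> 1" using card_mono[of "{g}" V] by simp
    then show False using assms(2) by simp
  qed
  then obtain v where v: "v \<in> V" "v \<noteq> g" by blast
  then have "(g,v) \<in> E\<^sup>*" using c assms(3) unfolding connected_graph_def by blast
  then show ?thesis using v(2) by (cases rule: converse_rtranclE) auto
qed

lemma not_md_self:
  assumes c: "connected_graph V E" and "card V \<ge> 2" "g \<in> V"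
  shows "\<not> max_distant V E g g"
proof
  assume m: "max_distant V E g g"
  obtain a where a: "(g,a) \<in> E" using has_nb[OF assms] by blast
  have aV: "a \<in> V" using graph_sub[OF c] a by blast
  have "gdist E g a \<le> 0" using m a gdist_refl[of E g] unfolding max_distant_def by fastforce
  then have "g = a" using gdist_eq0[OF c assms(3) aV] by simp
  moreover have "irrefl E" using c unfolding connected_graph_def graph_def by blast
  ultimately show False using a unfolding irrefl_def by blast
qed

lemma cart_mmd:
  assumes cG: "connected_graph VG EG" and cH: "connected_graph VH EH"
    and nG: "card VG \<ge> 2" and nH: "card VH \<ge> 2"
  shows "mutually_max_distant (VG \<times> VH) (cart_edges VG EG VH EH) (g,h) (g',h') \<longleftrightarrow>
         mutually_max_distant VG EG g g' \<and> mutually_max_distant VH EH h h'"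
proof (cases "g \<in> VG \<and> g' \<in> VG \<and> h \<in> VH \<and> h' \<in> VH")
  case True
  then have V: "g \<in> VG" "g' \<in> VG" "h \<in> VH" "h' \<in> VH" by auto
  have r1: "max_distant (VG \<times> VH) (cart_edges VG EG VH EH) (g,h) (g',h') \<longleftrightarrow>
         max_distant VG EG g g' \<and> max_distant VH EH h h'" by (rule cart_md[OF cG cH V])
  have r2: "max_distant (VG \<times> VH) (cart_edges VG EG VH EH) (g',h') (g,h) \<longleftrightarrow>
         max_distant VG EG g' g \<and> max_distant VH EH h' h" by (rule cart_md[OF cG cH V(2,1,4,3)])
  have "g = g' \<Longrightarrow> \<not> max_distant VG EG g g'" using not_md_self[OF cG nG V(1)] by blast
  moreover have "h = h' \<Longrightarrow> \<not> max_distant VH EH h h'" using not_md_self[OF cH nH V(3)] by blast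
  ultimately show ?thesis unfolding mutually_max_distant_def using r1 r2 V by auto
next
  case False
  then show ?thesis unfolding mutually_max_distant_def by auto
qed




lemma card_filter_sum: "finite S \<Longrightarrow> card {x\<in>S. P x} = (\<Sum>x\<in>S. if P x then 1 else (0::nat))"
  by (simp add: sum.If_cases Int_def)

definition indep :: "'a set \<Rightarrow> ('a \<times> 'a) set \<Rightarrow> 'a set \<Rightarrow> bool" where
  "indep V R J \<longleftrightarrow> J \<subseteq> V \<and> (\<forall>x\<in>J. \<forall>y\<in>J. (x,y) \<notin> R)"

definition cnb :: "'a set \<Rightarrow> ('a \<times> 'a) set \<Rightarrow> 'a set \<Rightarrow> 'a set" where
  "cnb V R A = {y\<in>V. y \<in> A \<or> (\<exists>x\<in>A. (x,y) \<in> R)}"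

definition auts :: "'a set \<Rightarrow> ('a \<times> 'a) set \<Rightarrow> ('a \<Rightarrow> 'a) set" where
  "auts V R = {f \<in> V \<rightarrow>\<^sub>E V. bij_betw f V V \<and> (\<forall>x\<in>V. \<forall>y\<in>V. (x,y) \<in> R \<longleftrightarrow> (f x, f y) \<in> R)}"

lemma auts_fin: "finite V \<Longrightarrow> finite (auts V R)"
  unfolding auts_def by (rule finite_subset[of _ "V \<rightarrow>\<^sub>E V"]) (auto intro: finite_PiE)

lemma aut_ex:
  assumes "vertex_transitive V R" "x \<in> V" "y \<in> V"
  shows "\<exists>f\<in>auts V R. f x = y"
proof -
  obtain f where f: "bij_betw f V V" "\<forall>a\<in>V. \<forall>b\<in>V. (a,b) \<in> R \<longleftrightarrow> (f a, f b) \<in> R" "f x = y"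
    using assms unfolding vertex_transitive_def by blast
  have b: "bij_betw (restrict f V) V V" using f(1) by (simp only: bij_betw_restrict_eq)
  have p: "restrict f V \<in> V \<rightarrow>\<^sub>E V" unfolding restrict_PiE_iff using f(1) bij_betwE by blast
  have r: "\<forall>a\<in>V. \<forall>b\<in>V. (a,b) \<in> R \<longleftrightarrow> (restrict f V a, restrict f V b) \<in> R" using f(2) by simp
  have "restrict f V \<in> auts V R" unfolding auts_def using b p r by blast
  moreover have "restrict f V x = y" using f(3) assms(2) by simp
  ultimately show ?thesis by blast
qed

lemma aut_id: "restrict id V \<in> auts V R"
proof -
  have b: "bij_betw (restrict id V) V V" by (simp only: bij_betw_restrict_eq bij_betw_id)
  have p: "restrict id V \<in> V \<rightarrow>\<^sub>E V" unfolding restrict_PiE_iff by simp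
  have r: "\<forall>a\<in>V. \<forall>b\<in>V. (a,b) \<in> R \<longleftrightarrow> (restrict id V a, restrict id V b) \<in> R" by simp
  show ?thesis unfolding auts_def using b p r by blast
qed

lemma aut_props:
  assumes "f \<in> auts V R"
  shows "\<And>x. x \<in> V \<Longrightarrow> f x \<in> V" "inj_on f V" "f ` V = V"
    "\<And>x y. x \<in> V \<Longrightarrow> y \<in> V \<Longrightarrow> (x,y) \<in> R \<longleftrightarrow> (f x, f y) \<in> R" "f \<in> extensional V"
proof -
  have f: "f \<in> V \<rightarrow>\<^sub>E V" "bij_betw f V V" "\<forall>x\<in>V. \<forall>y\<in>V. (x,y) \<in> R \<longleftrightarrow> (f x, f y) \<in> R"
    using assms unfolding auts_def by blast+
  show "\<And>x. x \<in> V \<Longrightarrow> f x \<in> V" using PiE_mem[OF f(1)] by blast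
  show "inj_on f V" using f(2) by (rule bij_betw_imp_inj_on)
  show "f ` V = V" using f(2) by (rule bij_betw_imp_surj_on)
  show "\<And>x y. x \<in> V \<Longrightarrow> y \<in> V \<Longrightarrow> (x,y) \<in> R \<longleftrightarrow> (f x, f y) \<in> R" using f(3) by blast
  show "f \<in> extensional V" using f(1) by (simp add: PiE_def)
qed

lemma aut_comp3:
  assumes "a \<in> auts V R" "b \<in> auts V R" "c \<in> auts V R"
  shows "restrict (\<lambda>z. a (b (c z))) V \<in> auts V R"
proof -
  note pa = aut_props[OF assms(1)] and pb = aut_props[OF assms(2)] and pc = aut_props[OF assms(3)]
  have inj: "inj_on (\<lambda>z. a (b (c z))) V"
    using pa(2) pb(2) pc(2) pb(1) pc(1) unfolding inj_on_def by metis
  have im: "(\<lambda>z. a (b (c z))) ` V = V" using pa(3) pb(3) pc(3) by (metis image_image)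
  have "bij_betw (restrict (\<lambda>z. a (b (c z))) V) V V"
    using inj im by (simp add: bij_betw_def inj_on_def image_def)
  moreover have "restrict (\<lambda>z. a (b (c z))) V \<in> V \<rightarrow>\<^sub>E V" using pa(1) pb(1) pc(1) by auto
  moreover have "\<forall>x\<in>V. \<forall>y\<in>V. (x,y) \<in> R \<longleftrightarrow> (a (b (c x)), a (b (c y))) \<in> R"
  proof (intro ballI)
    fix x y assume x: "x \<in> V" and y: "y \<in> V"
    show "(x,y) \<in> R \<longleftrightarrow> (a (b (c x)), a (b (c y))) \<in> R"
      using pc(4)[OF x y] pb(4)[OF pc(1)[OF x] pc(1)[OF y]] pa(4)[OF pb(1)[OF pc(1)[OF x]] pb(1)[OF pc(1)[OF y]]]
      by blast
  qed
  then have "\<forall>x\<in>V. \<forall>y\<in>V. (x,y) \<in> R \<longleftrightarrow>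
     (restrict (\<lambda>z. a (b (c z))) V x, restrict (\<lambda>z. a (b (c z))) V y) \<in> R" by simp
  ultimately show ?thesis unfolding auts_def by blast
qed

lemma cnt_le:
  assumes fin: "finite V" and vt: "vertex_transitive V R"
    and V: "x \<in> V" "y \<in> V" "x' \<in> V" "y' \<in> V"
  shows "card {f\<in>auts V R. f x = y} \<le> card {f\<in>auts V R. f x' = y'}"
proof -
  obtain p where p: "p \<in> auts V R" "p x' = x" using aut_ex[OF vt V(3,1)] by blast
  obtain q where q: "q \<in> auts V R" "q y = y'" using aut_ex[OF vt V(2,4)] by blast
  define m where "m = (\<lambda>f. restrict (\<lambda>z. q (f (p z))) V)"
  note pp = aut_props[OF p(1)] and pq = aut_props[OF q(1)]
  have "inj_on m {f\<in>auts V R. f x = y}"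
  proof (rule inj_onI)
    fix f1 f2 assume f1: "f1 \<in> {f\<in>auts V R. f x = y}" and f2: "f2 \<in> {f\<in>auts V R. f x = y}"
      and e: "m f1 = m f2"
    note p1 = aut_props[of f1 V R] and p2 = aut_props[of f2 V R]
    have "\<forall>z\<in>V. f1 (p z) = f2 (p z)"
    proof
      fix z assume z: "z \<in> V"
      have "q (f1 (p z)) = q (f2 (p z))" using fun_cong[OF e, of z] z unfolding m_def by simp
      have "f1 \<in> auts V R" "f2 \<in> auts V R" using f1 f2 by auto
      then have "f1 (p z) \<in> V" "f2 (p z) \<in> V" using p1(1) p2(1) pp(1)[OF z] by auto
      then show "f1 (p z) = f2 (p z)" using inj_onD[OF pq(2)] \<open>q (f1 (p z)) = q (f2 (p z))\<close> by blast
    qed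
    then have "\<forall>v\<in>V. f1 v = f2 v" using pp(3) by (metis image_iff)
    then show "f1 = f2" using p1(5) p2(5) f1 f2 by (intro extensionalityI) auto
  qed
  moreover have "m ` {f\<in>auts V R. f x = y} \<subseteq> {f\<in>auts V R. f x' = y'}"
  proof
    fix g assume "g \<in> m ` {f\<in>auts V R. f x = y}"
    then obtain f where f: "f \<in> auts V R" "f x = y" "g = m f" by blast
    have "g \<in> auts V R" unfolding f(3) m_def by (rule aut_comp3[OF q(1) f(1) p(1)])
    moreover have "g x' = y'" using f p q V unfolding m_def by simp
    ultimately show "g \<in> {f\<in>auts V R. f x' = y'}" by blast
  qed
  ultimately show ?thesis by (rule card_inj_on_le) (simp add: auts_fin[OF fin])
qed

lemma cnt_sum:
  assumes fin: "finite V" and N: "N \<subseteq> V" and x: "x \<in> V"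
  shows "card {f\<in>auts V R. f x \<in> N} = (\<Sum>y\<in>N. card {f\<in>auts V R. f x = y})"
proof -
  have fA: "finite (auts V R)" by (rule auts_fin[OF fin])
  have fN: "finite N" using N fin finite_subset by blast
  have "card {f\<in>auts V R. f x \<in> N} = (\<Sum>f\<in>auts V R. if f x \<in> N then 1 else (0::nat))"
    by (rule card_filter_sum[OF fA])
  also have "\<dots> = (\<Sum>f\<in>auts V R. \<Sum>y\<in>N. if f x = y then 1 else (0::nat))"
    using fN by (intro sum.cong refl) (simp add: sum.delta)
  also have "\<dots> = (\<Sum>y\<in>N. \<Sum>f\<in>auts V R. if f x = y then 1 else (0::nat))" by (rule sum.swap)
  also have "\<dots> = (\<Sum>y\<in>N. card {f\<in>auts V R. f x = y})"
    by (intro sum.cong refl) (rule card_filter_sum[OF fA, symmetric])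
  finally show ?thesis .
qed

lemma vt_bound:
  assumes fin: "finite V" and s: "sym R" and vt: "vertex_transitive V R"
    and amax: "\<And>J. indep V R J \<Longrightarrow> card J \<le> \<alpha>"
    and I0: "indep V R I0" "\<alpha> \<le> card I0"
    and A: "indep V R A"
  shows "card V * card A \<le> \<alpha> * card (cnb V R A)"
proof (cases "A = {}")
  case True then show ?thesis by simp
next
  case False
  then obtain x0 where x0A: "x0 \<in> A" by blast
  have AV: "A \<subseteq> V" using A unfolding indep_def by blast
  have I0V: "I0 \<subseteq> V" using I0 unfolding indep_def by blast
  have x0: "x0 \<in> V" using x0A AV by blast
  define N where "N = cnb V R A"
  define Au where "Au = auts V R"
  define c where "c = card {f\<in>Au. f x0 = x0}"
  have NV: "N \<subseteq> V" unfolding N_def cnb_def by blast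
  have AN: "A \<subseteq> N" unfolding N_def cnb_def using AV by blast
  have fA: "finite Au" unfolding Au_def by (rule auts_fin[OF fin])
  have fI0: "finite I0" using I0V fin finite_subset by blast
  have cc: "\<And>x y. x \<in> V \<Longrightarrow> y \<in> V \<Longrightarrow> card {f\<in>Au. f x = y} = c"
  proof -
    fix x y assume x: "x \<in> V" and y: "y \<in> V"
    show "card {f\<in>Au. f x = y} = c" unfolding c_def Au_def
      by (rule le_antisym[OF cnt_le[OF fin vt x y x0 x0] cnt_le[OF fin vt x0 x0 x y]])
  qed
  have step1: "\<And>f. f \<in> Au \<Longrightarrow> card A \<le> card {x\<in>I0. f x \<in> N}"
  proof -
    fix f assume f: "f \<in> Au"
    note pf = aut_props[OF f[unfolded Au_def]]
    define K where "K = {x\<in>I0. f x \<notin> N}"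
    have KV: "K \<subseteq> V" unfolding K_def using I0V by blast
    have "indep V R (f ` K \<union> A)" unfolding indep_def
    proof (intro conjI ballI)
      show "f ` K \<union> A \<subseteq> V" using KV pf(1) AV by blast
      fix a b assume a: "a \<in> f ` K \<union> A" and b: "b \<in> f ` K \<union> A"
      show "(a,b) \<notin> R"
      proof
        assume ab: "(a,b) \<in> R"
        then have ba: "(b,a) \<in> R" using s by (meson symD)
        consider "a \<in> f ` K" "b \<in> f ` K" | "a \<in> f ` K" "b \<in> A" | "a \<in> A" "b \<in> f ` K" | "a \<in> A" "b \<in> A"
          using a b by blast
        then show False
        proof cases
          case 1
          then obtain x y where xy: "x \<in> K" "y \<in> K" "a = f x" "b = f y" by blast
          have xV: "x \<in> V" and yV: "y \<in> V" using xy KV by auto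
          have "(x,y) \<in> R" using pf(4)[OF xV yV] ab xy by simp
          moreover have "x \<in> I0" "y \<in> I0" using xy unfolding K_def by auto
          ultimately show False using I0(1) unfolding indep_def by blast
        next
          case 2
          then have "a \<in> N" using ba pf(1) KV unfolding N_def cnb_def by blast
          then show False using 2 unfolding K_def by blast
        next
          case 3
          then have "b \<in> N" using ab pf(1) KV unfolding N_def cnb_def by blast
          then show False using 3 unfolding K_def by blast
        next
          case 4
          then show False using A ab unfolding indep_def by blast
        qed
      qed
    qed
    then have cJ: "card (f ` K \<union> A) \<le> \<alpha>" by (rule amax)
    have fK: "finite K" using fin KV finite_subset by blast
    have fAA: "finite A" using fin AV finite_subset by blast
    have "f ` K \<inter> A = {}" using AN unfolding K_def by blast
    moreover have "card (f ` K \<union> A) = card (f ` K) + card A"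
      by (rule card_Un_disjoint) (use fK fAA \<open>f ` K \<inter> A = {}\<close> in auto)
    moreover have "card (f ` K) = card K" using pf(2) KV by (meson card_image inj_on_subset)
    moreover have "card I0 = card K + card {x\<in>I0. f x \<in> N}"
    proof -
      have "I0 = K \<union> {x\<in>I0. f x \<in> N}" unfolding K_def by blast
      moreover have "card (K \<union> {x\<in>I0. f x \<in> N}) = card K + card {x\<in>I0. f x \<in> N}"
        by (rule card_Un_disjoint) (use fI0 in \<open>auto simp: K_def\<close>)
      ultimately show ?thesis by simp
    qed
    ultimately show "card A \<le> card {x\<in>I0. f x \<in> N}" using I0(2) cJ by linarith
  qed
  have "card Au * card A = (\<Sum>f\<in>Au. card A)" by simp
  also have "\<dots> \<le> (\<Sum>f\<in>Au. card {x\<in>I0. f x \<in> N})" by (rule sum_mono) (rule step1)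
  also have "\<dots> = (\<Sum>f\<in>Au. \<Sum>x\<in>I0. if f x \<in> N then 1 else (0::nat))"
    by (intro sum.cong refl) (rule card_filter_sum[OF fI0])
  also have "\<dots> = (\<Sum>x\<in>I0. \<Sum>f\<in>Au. if f x \<in> N then 1 else (0::nat))" by (rule sum.swap)
  also have "\<dots> = (\<Sum>x\<in>I0. card {f\<in>Au. f x \<in> N})"
    by (intro sum.cong refl) (rule card_filter_sum[OF fA, symmetric])
  also have "\<dots> = (\<Sum>x\<in>I0. \<Sum>y\<in>N. c)"
  proof (intro sum.cong refl)
    fix x assume "x \<in> I0"
    then have xV: "x \<in> V" using I0V by blast
    have "card {f\<in>Au. f x \<in> N} = (\<Sum>y\<in>N. card {f\<in>Au. f x = y})"
      unfolding Au_def by (rule cnt_sum[OF fin NV xV])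
    also have "\<dots> = (\<Sum>y\<in>N. c)" using cc[OF xV] NV by (intro sum.cong refl) blast
    finally show "card {f\<in>Au. f x \<in> N} = (\<Sum>y\<in>N. c)" .
  qed
  also have "\<dots> = card I0 * card N * c" by (simp only: sum_constant mult.assoc of_nat_id)
  finally have ineq: "card Au * card A \<le> card I0 * card N * c" .
  have fx0: "\<And>f. f \<in> Au \<Longrightarrow> f x0 \<in> V" unfolding Au_def by (rule aut_props(1)[OF _ x0])
  have "{f\<in>Au. f x0 \<in> V} = Au" using fx0 by blast
  then have "card Au = card {f\<in>Au. f x0 \<in> V}" by simp
  also have "\<dots> = (\<Sum>y\<in>V. card {f\<in>Au. f x0 = y})"
    unfolding Au_def by (rule cnt_sum[OF fin subset_refl x0])
  also have "\<dots> = (\<Sum>y\<in>V. c)" using cc[OF x0] by (intro sum.cong refl) blast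
  also have "\<dots> = card V * c" by (simp only: sum_constant of_nat_id)
  finally have cAu: "card Au = card V * c" .
  have "restrict id V \<in> Au" unfolding Au_def by (rule aut_id)
  moreover have "restrict id V x0 = x0" using x0 by simp
  ultimately have "restrict id V \<in> {f\<in>Au. f x0 = x0}" by blast
  moreover have "finite {f\<in>Au. f x0 = x0}" using fA by simp
  ultimately have cpos: "c > 0" unfolding c_def using card_gt_0_iff by blast
  have e1: "card Au * card A = c * (card V * card A)" unfolding cAu by (simp only: mult.commute mult.left_commute)
  have e2: "card I0 * card N * c = c * (card I0 * card N)" by (simp only: mult.commute mult.left_commute)
  have "c * (card V * card A) \<le> c * (card I0 * card N)" using ineq unfolding e1 e2 .
  then have "card V * card A \<le> card I0 * card N" using cpos by (rule mult_le_cancel1[THEN iffD1, THEN mp])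
  also have "\<dots> \<le> \<alpha> * card N" using amax[OF I0(1)] by simp
  finally show ?thesis unfolding N_def .
qed




lemma dc_swap:
  assumes "finite VA" "finite VB"
  shows "(\<Sum>h\<in>VB. card {g\<in>VA. P g h}) = (\<Sum>g\<in>VA. card {h\<in>VB. P g h})"
proof -
  have "(\<Sum>h\<in>VB. card {g\<in>VA. P g h}) = (\<Sum>h\<in>VB. \<Sum>g\<in>VA. if P g h then 1 else (0::nat))"
    by (intro sum.cong refl) (rule card_filter_sum[OF assms(1)])
  also have "\<dots> = (\<Sum>g\<in>VA. \<Sum>h\<in>VB. if P g h then 1 else (0::nat))" by (rule sum.swap)
  also have "\<dots> = (\<Sum>g\<in>VA. card {h\<in>VB. P g h})"
    by (intro sum.cong refl) (rule card_filter_sum[OF assms(2), symmetric])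
  finally show ?thesis .
qed

lemma dc_card:
  assumes "finite VA" "finite VB" "X \<subseteq> VA \<times> VB"
  shows "card X = (\<Sum>g\<in>VA. card {h\<in>VB. (g,h) \<in> X})"
proof -
  have "X = (SIGMA g:VA. {h\<in>VB. (g,h) \<in> X})" using assms(3) by blast
  then have "card X = card (SIGMA g:VA. {h\<in>VB. (g,h) \<in> X})" by simp
  also have "\<dots> = (\<Sum>g\<in>VA. card {h\<in>VB. (g,h) \<in> X})"
    by (rule card_SigmaI) (use assms in auto)
  finally show ?thesis .
qed

lemma zhang:
  fixes VA :: "'a set" and RA and VB :: "'b set" and RB and \<alpha>A \<alpha>B :: nat
  assumes fA: "finite VA" and fB: "finite VB" and sA: "sym RA" and sB: "sym RB"
    and bA: "\<And>X. indep VA RA X \<Longrightarrow> card VA * card X \<le> \<alpha>A * card (cnb VA RA X)"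
    and bB: "\<And>X. indep VB RB X \<Longrightarrow> card VB * card X \<le> \<alpha>B * card (cnb VB RB X)"
    and IV: "I \<subseteq> VA \<times> VB"
    and ind: "\<And>g h g' h'. (g,h) \<in> I \<Longrightarrow> (g',h') \<in> I \<Longrightarrow> (g,g') \<in> RA \<Longrightarrow> (h,h') \<in> RB \<Longrightarrow> False"
  shows "card I \<le> max (\<alpha>A * card VB) (\<alpha>B * card VA)"
proof -
  define I1 where "I1 = {p\<in>I. \<exists>h'. (fst p,h') \<in> I \<and> (snd p,h') \<in> RB}"
  define I2 where "I2 = I - I1"
  define F1 where "F1 = (\<lambda>h. {g\<in>VA. (g,h) \<in> I1})"
  define F2 where "F2 = (\<lambda>g. {h\<in>VB. (g,h) \<in> I2})"
  define N1 where "N1 = (\<lambda>h. cnb VA RA (F1 h))"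
  define N2 where "N2 = (\<lambda>g. cnb VB RB (F2 g))"
  define M where "M = max (\<alpha>A * card VB) (\<alpha>B * card VA)"
  have I1V: "I1 \<subseteq> VA \<times> VB" and I2V: "I2 \<subseteq> VA \<times> VB" using IV unfolding I1_def I2_def by auto
  have iA: "indep VA RA (F1 h)" for h
    unfolding indep_def
  proof (intro conjI ballI)
    show "F1 h \<subseteq> VA" unfolding F1_def by blast
    fix g g' assume g: "g \<in> F1 h" and g': "g' \<in> F1 h"
    show "(g,g') \<notin> RA"
    proof
      assume gg: "(g,g') \<in> RA"
      from g obtain h' where h': "(g,h') \<in> I" "(h,h') \<in> RB" unfolding F1_def I1_def by auto
      have "(h',h) \<in> RB" using h'(2) sB by (meson symD)
      moreover have "(g',h) \<in> I" using g' unfolding F1_def I1_def by auto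
      ultimately show False using ind[OF h'(1) _ gg] by blast
    qed
  qed
  have iB: "indep VB RB (F2 g)" for g
    unfolding indep_def
  proof (intro conjI ballI)
    show "F2 g \<subseteq> VB" unfolding F2_def by blast
    fix h h' assume h: "h \<in> F2 g" and h': "h' \<in> F2 g"
    show "(h,h') \<notin> RB"
    proof
      assume hh: "(h,h') \<in> RB"
      have "(g,h) \<in> I" "(g,h') \<in> I" "(g,h) \<notin> I1" using h h' unfolding F2_def I2_def by auto
      then show False using hh unfolding I1_def by auto
    qed
  qed
  have disj: "\<not> (g \<in> N1 h \<and> h \<in> N2 g)" for g h
  proof
    assume "g \<in> N1 h \<and> h \<in> N2 g"
    then have a: "g \<in> F1 h \<or> (\<exists>g1\<in>F1 h. (g1,g) \<in> RA)" and b: "h \<in> F2 g \<or> (\<exists>h2\<in>F2 g. (h2,h) \<in> RB)"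
      unfolding N1_def N2_def cnb_def by auto
    show False
    proof (cases "g \<in> F1 h")
      case True
      then have gh: "(g,h) \<in> I1" unfolding F1_def by blast
      show False
      proof (cases "h \<in> F2 g")
        case True then show False using gh unfolding F2_def I2_def by blast
      next
        case False
        then obtain h2 where h2: "h2 \<in> F2 g" "(h2,h) \<in> RB" using b by blast
        have "(g,h) \<in> I" using gh unfolding I1_def by blast
        then have "(g,h2) \<in> I1" using h2 unfolding F2_def I2_def I1_def by auto
        then show False using h2(1) unfolding F2_def I2_def by blast
      qed
    next
      case False
      then obtain g1 where g1: "g1 \<in> F1 h" "(g1,g) \<in> RA" using a by blast
      then obtain h' where h': "(g1,h') \<in> I" "(h,h') \<in> RB" unfolding F1_def I1_def by auto
      have g1h: "(g1,h) \<in> I" using g1(1) unfolding F1_def I1_def by auto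
      show False
      proof (cases "h \<in> F2 g")
        case True
        then have "(g,h) \<in> I" unfolding F2_def I2_def by blast
        moreover have "(h',h) \<in> RB" using h'(2) sB by (meson symD)
        ultimately show False using ind[OF h'(1) _ g1(2)] by blast
      next
        case False
        then obtain h2 where h2: "h2 \<in> F2 g" "(h2,h) \<in> RB" using b by blast
        have "(g,h2) \<in> I" using h2(1) unfolding F2_def I2_def by blast
        moreover have "(h,h2) \<in> RB" using h2(2) sB by (meson symD)
        ultimately show False using ind[OF g1h _ g1(2)] by blast
      qed
    qed
  qed
  define S1 where "S1 = (\<Sum>h\<in>VB. card (N1 h))"
  define S2 where "S2 = (\<Sum>g\<in>VA. card (N2 g))"
  have N1V: "N1 h \<subseteq> VA" for h unfolding N1_def cnb_def by blast
  have N2V: "N2 g \<subseteq> VB" for g unfolding N2_def cnb_def by blast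
  have e1: "\<And>h. {g\<in>VA. g \<in> N1 h} = N1 h" using N1V by blast
  have e2: "\<And>g. {h\<in>VB. h \<in> N2 g} = N2 g" using N2V by blast
  have "S1 = (\<Sum>h\<in>VB. card {g\<in>VA. g \<in> N1 h})"
    unfolding S1_def by (simp only: e1)
  also have "\<dots> = (\<Sum>g\<in>VA. card {h\<in>VB. g \<in> N1 h})" by (rule dc_swap[OF fA fB])
  finally have S1e: "S1 = (\<Sum>g\<in>VA. card {h\<in>VB. g \<in> N1 h})" .
  have S2e: "S2 = (\<Sum>g\<in>VA. card {h\<in>VB. h \<in> N2 g})"
    unfolding S2_def by (simp only: e2)
  have "S1 + S2 = (\<Sum>g\<in>VA. card {h\<in>VB. g \<in> N1 h} + card {h\<in>VB. h \<in> N2 g})"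
    unfolding S1e S2e by (rule sum.distrib[symmetric])
  also have "\<dots> \<le> (\<Sum>g\<in>VA. card VB)"
  proof (rule sum_mono)
    fix g assume "g \<in> VA"
    have "card {h\<in>VB. g \<in> N1 h} + card {h\<in>VB. h \<in> N2 g} = card ({h\<in>VB. g \<in> N1 h} \<union> {h\<in>VB. h \<in> N2 g})"
      by (rule card_Un_disjoint[symmetric]) (use fB disj in auto)
    also have "\<dots> \<le> card VB" by (rule card_mono[OF fB]) blast
    finally show "card {h\<in>VB. g \<in> N1 h} + card {h\<in>VB. h \<in> N2 g} \<le> card VB" .
  qed
  also have "\<dots> = card VA * card VB" by simp
  finally have Ssum: "S1 + S2 \<le> card VA * card VB" .
  have "card I1 = (\<Sum>g\<in>VB. card {h\<in>VA. (h,g) \<in> I1})"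
  proof -
    have "card I1 = (\<Sum>g\<in>VA. card {h\<in>VB. (g,h) \<in> I1})" by (rule dc_card[OF fA fB I1V])
    also have "\<dots> = (\<Sum>h\<in>VB. card {g\<in>VA. (g,h) \<in> I1})" by (rule dc_swap[OF fA fB, symmetric])
    finally show ?thesis .
  qed
  then have cI1: "card I1 = (\<Sum>h\<in>VB. card (F1 h))" unfolding F1_def by simp
  have cI2: "card I2 = (\<Sum>g\<in>VA. card (F2 g))" unfolding F2_def by (rule dc_card[OF fA fB I2V])
  have "card VA * card I1 = (\<Sum>h\<in>VB. card VA * card (F1 h))" unfolding cI1 by (rule sum_distrib_left)
  also have "\<dots> \<le> (\<Sum>h\<in>VB. \<alpha>A * card (N1 h))" unfolding N1_def by (intro sum_mono bA iA)
  also have "\<dots> = \<alpha>A * S1" unfolding S1_def by (rule sum_distrib_left[symmetric])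
  finally have b1: "card VA * card I1 \<le> \<alpha>A * S1" .
  have "card VB * card I2 = (\<Sum>g\<in>VA. card VB * card (F2 g))" unfolding cI2 by (rule sum_distrib_left)
  also have "\<dots> \<le> (\<Sum>g\<in>VA. \<alpha>B * card (N2 g))" unfolding N2_def by (intro sum_mono bB iB)
  also have "\<dots> = \<alpha>B * S2" unfolding S2_def by (rule sum_distrib_left[symmetric])
  finally have b2: "card VB * card I2 \<le> \<alpha>B * S2" .
  have "card VB * (card VA * card I1) \<le> card VB * (\<alpha>A * S1)" using b1 by (rule mult_le_mono2)
  also have "\<dots> = (\<alpha>A * card VB) * S1" by (simp only: mult.commute mult.left_commute)
  also have "\<dots> \<le> M * S1" unfolding M_def by (rule mult_le_mono1) simp
  finally have c1: "card VB * (card VA * card I1) \<le> M * S1" .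
  have "card VA * (card VB * card I2) \<le> card VA * (\<alpha>B * S2)" using b2 by (rule mult_le_mono2)
  also have "\<dots> = (\<alpha>B * card VA) * S2" by (simp only: mult.commute mult.left_commute)
  also have "\<dots> \<le> M * S2" unfolding M_def by (rule mult_le_mono1) simp
  finally have c2: "card VA * (card VB * card I2) \<le> M * S2" .
  have cI: "card I = card I1 + card I2"
  proof -
    have "I = I1 \<union> I2" "I1 \<inter> I2 = {}" unfolding I2_def I1_def by auto
    moreover have "finite I1" "finite I2" using I1V I2V fA fB finite_subset by (metis finite_SigmaI)+
    ultimately show ?thesis using card_Un_disjoint by metis
  qed
  have "(card VA * card VB) * card I = card VB * (card VA * card I1) + card VA * (card VB * card I2)"
    unfolding cI by (simp add: algebra_simps)
  also have "\<dots> \<le> M * S1 + M * S2" using c1 c2 by (rule add_mono)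
  also have "\<dots> = M * (S1 + S2)" by (simp add: algebra_simps)
  also have "\<dots> \<le> M * (card VA * card VB)" using Ssum by (rule mult_le_mono2)
  finally have fin: "(card VA * card VB) * card I \<le> (card VA * card VB) * M" by (simp only: mult.commute)
  show ?thesis
  proof (cases "card VA * card VB = 0")
    case True
    then have "VA = {} \<or> VB = {}" using fA fB by auto
    then have "I = {}" using IV by auto
    then show ?thesis by simp
  next
    case False
    then show ?thesis using fin unfolding M_def by simp
  qed
qed




lemma mmd_sym: "mutually_max_distant V E u v \<Longrightarrow> mutually_max_distant V E v u"
  unfolding mutually_max_distant_def by auto

lemma sr_iff: "(x,y) \<in> sr_edges V E \<longleftrightarrow> mutually_max_distant V E x y"
proof
  assume "(x,y) \<in> sr_edges V E" then show "mutually_max_distant V E x y" unfolding sr_edges_def by simp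
next
  assume m: "mutually_max_distant V E x y"
  then have "x \<in> V" "y \<in> V" unfolding mutually_max_distant_def by auto
  then have "x \<in> boundary V E" "y \<in> boundary V E"
    unfolding boundary_def using m mmd_sym[OF m] by auto
  then show "(x,y) \<in> sr_edges V E" unfolding sr_edges_def using m by simp
qed

lemma sr_sym: "sym (sr_edges V E)"
  unfolding sym_def sr_iff by (intro allI impI) (erule mmd_sym)

lemma bd_sub: "boundary V E \<subseteq> V" unfolding boundary_def by blast

lemma mmd_bd: "mutually_max_distant V E u v \<Longrightarrow> u \<in> boundary V E \<and> v \<in> boundary V E"
  using sr_iff[of u v V E] unfolding sr_edges_def by simp




lemma fin_of: "connected_graph V E \<Longrightarrow> finite V"
  unfolding connected_graph_def graph_def by blast

lemma alpha_facts:
  assumes c: "connected_graph V E"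
  shows "strong_metric_dim V E \<le> card (boundary V E)"
    and "\<And>J. indep (boundary V E) (sr_edges V E) J \<Longrightarrow> card J \<le> card (boundary V E) - strong_metric_dim V E"
    and "\<exists>I0. indep (boundary V E) (sr_edges V E) I0 \<and> card (boundary V E) - strong_metric_dim V E \<le> card I0"
proof -
  have fB: "finite (boundary V E)" by (rule finite_subset[OF bd_sub fin_of[OF c]])
  have hb1: "\<forall>u v. mutually_max_distant V E u v \<longrightarrow> u \<in> boundary V E \<or> v \<in> boundary V E"
    by (intro allI impI disjI1) (erule mmd_bd[THEN conjunct1])
  have hb: "hitset V E (boundary V E)" unfolding hitset_def using bd_sub hb1 by (intro conjI)
  show d: "strong_metric_dim V E \<le> card (boundary V E)" by (rule dim_props(2)[OF c hb])
  show "card J \<le> card (boundary V E) - strong_metric_dim V E" if J: "indep (boundary V E) (sr_edges V E) J" for J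
  proof -
    have JB: "J \<subseteq> boundary V E" using J unfolding indep_def by blast
    have fJ: "finite J" by (rule finite_subset[OF JB fB])
    have "hitset V E (boundary V E - J)"
      unfolding hitset_def
    proof (intro conjI allI impI)
      show "boundary V E - J \<subseteq> V" using bd_sub[of V E] by blast
      fix u v assume m: "mutually_max_distant V E u v"
      then have "(u,v) \<in> sr_edges V E" by (simp add: sr_iff)
      then have "\<not> (u \<in> J \<and> v \<in> J)" using J unfolding indep_def by blast
      moreover have "u \<in> boundary V E" "v \<in> boundary V E" using mmd_bd[OF m] by auto
      ultimately show "u \<in> boundary V E - J \<or> v \<in> boundary V E - J" by blast
    qed
    then have "strong_metric_dim V E \<le> card (boundary V E - J)" by (rule dim_props(2)[OF c])
    moreover have "card (boundary V E - J) = card (boundary V E) - card J"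
      using card_Diff_subset[OF fJ JB] .
    moreover have "card J \<le> card (boundary V E)" by (rule card_mono[OF fB JB])
    ultimately show ?thesis by linarith
  qed
  obtain S0 where S0: "hitset V E S0" "card S0 = strong_metric_dim V E" using dim_props(1)[OF c] by blast
  have "indep (boundary V E) (sr_edges V E) (boundary V E - S0)"
    unfolding indep_def
  proof (intro conjI ballI)
    show "boundary V E - S0 \<subseteq> boundary V E" by blast
    fix x y assume x: "x \<in> boundary V E - S0" and y: "y \<in> boundary V E - S0"
    show "(x,y) \<notin> sr_edges V E"
    proof
      assume "(x,y) \<in> sr_edges V E"
      then have "mutually_max_distant V E x y" by (simp add: sr_iff)
      then show False using S0(1) x y unfolding hitset_def by blast
    qed
  qed
  moreover have "card (boundary V E) - strong_metric_dim V E \<le> card (boundary V E - S0)"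
  proof -
    have fS0: "finite S0" using S0(1) unfolding hitset_def by (blast intro: finite_subset[OF _ fin_of[OF c]])
    show ?thesis using diff_card_le_card_Diff[OF fS0, of "boundary V E"] S0(2) by simp
  qed
  ultimately show "\<exists>I0. indep (boundary V E) (sr_edges V E) I0 \<and> card (boundary V E) - strong_metric_dim V E \<le> card I0"
    by blast
qed

lemma bound_of:
  assumes c: "connected_graph V E" and vt: "vertex_transitive (boundary V E) (sr_edges V E)"
  shows "\<And>X. indep (boundary V E) (sr_edges V E) X \<Longrightarrow>
     card (boundary V E) * card X \<le> (card (boundary V E) - strong_metric_dim V E) * card (cnb (boundary V E) (sr_edges V E) X)"
proof -
  fix X assume X: "indep (boundary V E) (sr_edges V E) X"
  have fB: "finite (boundary V E)" by (rule finite_subset[OF bd_sub fin_of[OF c]])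
  obtain I0 where I0: "indep (boundary V E) (sr_edges V E) I0" "card (boundary V E) - strong_metric_dim V E \<le> card I0"
    using alpha_facts(3)[OF c] by blast
  show "card (boundary V E) * card X \<le> (card (boundary V E) - strong_metric_dim V E) * card (cnb (boundary V E) (sr_edges V E) X)"
    by (rule vt_bound[OF fB sr_sym vt alpha_facts(2)[OF c] I0 X])
qed

theorem theorem14:
  fixes VG :: "'a set" and EG :: "('a \<times> 'a) set" and VH :: "'b set" and EH :: "('b \<times> 'b) set"
  assumes "connected_graph VG EG" and "connected_graph VH EH"
    and "card VG \<ge> 2" and "card VH \<ge> 2"
    and "vertex_transitive (boundary VG EG) (sr_edges VG EG)"
    and "vertex_transitive (boundary VH EH) (sr_edges VH EH)"
  shows "strong_metric_dim (VG \<times> VH) (cart_edges VG EG VH EH) =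
           min (card (boundary VG EG) * strong_metric_dim VH EH)
               (card (boundary VH EH) * strong_metric_dim VG EG)"
proof -
  note cG = assms(1) and cH = assms(2)
  let ?P = "cart_edges VG EG VH EH"
  let ?BG = "boundary VG EG" and ?BH = "boundary VH EH"
  let ?dG = "strong_metric_dim VG EG" and ?dH = "strong_metric_dim VH EH"
  let ?dP = "strong_metric_dim (VG \<times> VH) ?P"
  have cP: "connected_graph (VG \<times> VH) ?P" by (rule cart_conn[OF cG cH])
  have mP: "\<And>g h g' h'. mutually_max_distant (VG \<times> VH) ?P (g,h) (g',h') \<longleftrightarrow>
         mutually_max_distant VG EG g g' \<and> mutually_max_distant VH EH h h'"
    by (rule cart_mmd[OF cG cH assms(3,4)])
  have fBG: "finite ?BG" by (rule finite_subset[OF bd_sub fin_of[OF cG]])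
  have fBH: "finite ?BH" by (rule finite_subset[OF bd_sub fin_of[OF cH]])
  have dGle: "?dG \<le> card ?BG" by (rule alpha_facts(1)[OF cG])
  have dHle: "?dH \<le> card ?BH" by (rule alpha_facts(1)[OF cH])
  have up1: "?dP \<le> card ?BG * ?dH"
  proof -
    obtain C where C: "hitset VH EH C" "card C = ?dH" using dim_props(1)[OF cH] by blast
    have "hitset (VG \<times> VH) ?P (?BG \<times> C)"
      unfolding hitset_def
    proof (intro conjI allI impI)
      have "C \<subseteq> VH" using C(1) unfolding hitset_def by (rule conjunct1)
      then show "?BG \<times> C \<subseteq> VG \<times> VH" using bd_sub[of VG EG] by (rule Sigma_mono[rotated])
      fix p q assume m: "mutually_max_distant (VG \<times> VH) ?P p q"
      obtain g h where p: "p = (g,h)" by (cases p)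
      obtain g' h' where q: "q = (g',h')" by (cases q)
      have "mutually_max_distant VG EG g g'" "mutually_max_distant VH EH h h'" using m mP[of g h g' h'] p q by auto
      then have "g \<in> ?BG" "g' \<in> ?BG" "h \<in> C \<or> h' \<in> C" using C(1) mmd_bd[of VG EG g g'] unfolding hitset_def by auto
      then show "p \<in> ?BG \<times> C \<or> q \<in> ?BG \<times> C" using p q by auto
    qed
    then have "?dP \<le> card (?BG \<times> C)" by (rule dim_props(2)[OF cP])
    then show ?thesis using C(2) by (simp add: card_cartesian_product)
  qed
  have up2: "?dP \<le> card ?BH * ?dG"
  proof -
    obtain C where C: "hitset VG EG C" "card C = ?dG" using dim_props(1)[OF cG] by blast
    have "hitset (VG \<times> VH) ?P (C \<times> ?BH)"
      unfolding hitset_def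
    proof (intro conjI allI impI)
      have "C \<subseteq> VG" using C(1) unfolding hitset_def by (rule conjunct1)
      then show "C \<times> ?BH \<subseteq> VG \<times> VH" using bd_sub[of VH EH] by (rule Sigma_mono)
      fix p q assume m: "mutually_max_distant (VG \<times> VH) ?P p q"
      obtain g h where p: "p = (g,h)" by (cases p)
      obtain g' h' where q: "q = (g',h')" by (cases q)
      have "mutually_max_distant VG EG g g'" "mutually_max_distant VH EH h h'" using m mP[of g h g' h'] p q by auto
      then have "h \<in> ?BH" "h' \<in> ?BH" "g \<in> C \<or> g' \<in> C" using C(1) mmd_bd[of VH EH h h'] unfolding hitset_def by auto
      then show "p \<in> C \<times> ?BH \<or> q \<in> C \<times> ?BH" using p q by auto
    qed
    then have "?dP \<le> card (C \<times> ?BH)" by (rule dim_props(2)[OF cP])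
    then show ?thesis using C(2) by (simp add: card_cartesian_product mult.commute)
  qed
  obtain S where S: "hitset (VG \<times> VH) ?P S" "card S = ?dP" using dim_props(1)[OF cP] by blast
  define I where "I = (?BG \<times> ?BH) - S"
  define aG where "aG = card ?BG - ?dG"
  define aH where "aH = card ?BH - ?dH"
  have cI: "card I \<le> max (aG * card ?BH) (aH * card ?BG)"
    unfolding aG_def aH_def
  proof (rule zhang[OF fBG fBH sr_sym sr_sym bound_of[OF cG assms(5)] bound_of[OF cH assms(6)]])
    show "I \<subseteq> ?BG \<times> ?BH" unfolding I_def by blast
    fix g h g' h' assume gh: "(g,h) \<in> I" and gh': "(g',h') \<in> I"
      and e1: "(g,g') \<in> sr_edges VG EG" and e2: "(h,h') \<in> sr_edges VH EH"
    have "mutually_max_distant (VG \<times> VH) ?P (g,h) (g',h')" using e1 e2 mP[of g h g' h'] by (simp add: sr_iff)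
    then have "(g,h) \<in> S \<or> (g',h') \<in> S" using S(1) unfolding hitset_def by blast
    then show False using gh gh' unfolding I_def by blast
  qed
  have fS: "finite S" using S(1) unfolding hitset_def by (blast intro: finite_subset[OF _ fin_of[OF cP]])
  have "card (?BG \<times> ?BH) = card (S \<inter> (?BG \<times> ?BH)) + card I"
  proof -
    have "?BG \<times> ?BH = (S \<inter> (?BG \<times> ?BH)) \<union> I" "(S \<inter> (?BG \<times> ?BH)) \<inter> I = {}" unfolding I_def by auto
    moreover have "finite I" unfolding I_def using fBG fBH by simp
    ultimately show ?thesis using fS card_Un_disjoint by (metis finite_Int)
  qed
  moreover have "card (S \<inter> (?BG \<times> ?BH)) \<le> card S" using fS by (simp add: card_mono)
  ultimately have lo: "card ?BG * card ?BH \<le> card S + card I" by (simp add: card_cartesian_product)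
  have "aG + ?dG = card ?BG" unfolding aG_def using dGle by simp
  then have "(aG + ?dG) * card ?BH = card ?BG * card ?BH" by simp
  then have aGe: "aG * card ?BH + ?dG * card ?BH = card ?BG * card ?BH" by (simp only: add_mult_distrib)
  have "aH + ?dH = card ?BH" unfolding aH_def using dHle by simp
  then have "(aH + ?dH) * card ?BG = card ?BG * card ?BH" by (simp add: mult.commute)
  then have aHe: "aH * card ?BG + ?dH * card ?BG = card ?BG * card ?BH" by (simp only: add_mult_distrib)
  have low: "min (card ?BG * ?dH) (card ?BH * ?dG) \<le> ?dP"
  proof (cases "aG * card ?BH \<le> aH * card ?BG")
    case True
    then have "card I \<le> aH * card ?BG" using cI by simp
    then have "?dH * card ?BG \<le> card S" using lo aHe by linarith
    then show ?thesis using S(2) by (simp add: mult.commute)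
  next
    case False
    then have "card I \<le> aG * card ?BH" using cI by simp
    then have "?dG * card ?BH \<le> card S" using lo aGe by linarith
    then show ?thesis using S(2) by (simp add: mult.commute)
  qed
  show ?thesis using low up1 up2 by simp
qed


end
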